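(* In the setting of the finite systems (see context), for every $t$: $$\det(\lambda I-L1_N(t))=\lambda^{N+2}-C_0\lambda^{N+1}-C_1\lambda^{N}-\dots-C_{N+1},$$ $$\det(\lambda I-L2_N(t))=\lambda^{N+p+1}-\tilde C_0\lambda^{N+p}-\tilde C_1\lambda^{N+p-1}-\dots-\tilde C_{N+p},$$ i.e. the finite rank coefficients $C_v$ and $\tilde C_v$ coincide, up to sign, with the coefficients of the characteristic polynomials of $L1_N$ and $L2_N$.
   Context: Let $p\ge1$, $N\ge 2p-1$, and let $a_0,\dots,a_N$ and $b_0,\dots,b_N$ be nonzero complex numbers (e.g. values at time $t$ of solutions of the finite Bogoyavlensky lattices $\dot a_i=a_i(\prod_{j=1}^p a_{i+j}-\prod_{j=1}^p a_{i-j})$ and $\dot b_i=b_i(\sum_{j=1}^p b_{i+j}-\sum_{j=1}^p b_{i-j})$, $i=0,\dots,N$, with $a_l=b_l=0$ for $l<0$ or $l>N$). $L1_N$ is the $(N+2)\times(N+2)$ matrix (indices $0,\dots,N+1$) with $(L1_N)_{i,i+p}=1$ for $0\le i\le N+1-p$, $(L1_N)_{i+1,i}=a_i$ for $0\le i\le N$, other entries zero; $S^l_k=(L1_N^k)_{l-1,0}$ for $l=1,\dots,p$, $k\ge0$. $C_0,\dots,C_{N+1}$ are the complex numbers with $S^l_k=\sum_{v=0}^{N+1}C_vS^l_{k-v-1}$ for all $k\ge N+2$, $l=1,\dots,p$. $L2_N$ is the $(N+p+1)\times(N+p+1)$ matrix (indices $0,\dots,N+p$) with $(L2_N)_{i,i+1}=1$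 for $0\le i\le N+p-1$, $(L2_N)_{i+p,i}=b_i$ for $0\le i\le N$, other entries zero; $\tilde S^l_k=(L2_N^k)_{0,l-1}$; $\tilde C_0,\dots,\tilde C_{N+p}$ are the complex numbers with $\tilde S^l_k=\sum_{v=0}^{N+p}\tilde C_v\tilde S^l_{k-v-1}$ for all $k\ge N+p+1$, $l=1,\dots,p$. Standing fact from the paper: with $\alpha_{i,j}=S^{\operatorname{rem}(i,p)+1}_{\lfloor i/p\rfloor+j}$, the determinants $\det(\alpha_{i,j})_{i,j=0}^k$ are nonzero for $k=0,\dots,N+1$ and the matrix $(\alpha_{i,j})_{i,j\ge0}$ has rank $N+2$ (analogously for the $\tilde S$ with $\tilde\alpha_{i,j}=\tilde S^{\operatorname{rem}(j,p)+1}_{i+\lfloor j/p\rfloor}$, orders up to $N+p+1$), so these coefficients are uniquely determined. *)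

theory Defs
  imports "Jordan_Normal_Form.Char_Poly"
begin

definition L1 :: "nat \<Rightarrow> nat \<Rightarrow> (nat \<Rightarrow> complex) \<Rightarrow> complex mat" where
  "L1 p N a = mat (N+2) (N+2)
     (\<lambda>(i,j). if j = i + p then 1 else if i = j + 1 \<and> j \<le> N then a j else 0)"

definition L2 :: "nat \<Rightarrow> nat \<Rightarrow> (nat \<Rightarrow> complex) \<Rightarrow> complex mat" where
  "L2 p N b = mat (N+p+1) (N+p+1)
     (\<lambda>(i,j). if j = i + 1 then 1 else if i = j + p \<and> j \<le> N then b j else 0)"

definition S1 :: "nat \<Rightarrow> nat \<Rightarrow> (nat \<Rightarrow> complex) \<Rightarrow> nat \<Rightarrow> nat \<Rightarrow> complex" where
  "S1 p N a l k = (L1 p N a ^\<^sub>m k) $$ (l - 1, 0)"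

definition S2 :: "nat \<Rightarrow> nat \<Rightarrow> (nat \<Rightarrow> complex) \<Rightarrow> nat \<Rightarrow> nat \<Rightarrow> complex" where
  "S2 p N b l k = (L2 p N b ^\<^sub>m k) $$ (0, l - 1)"

end

theory Submission
  imports Defs
begin

definition compm :: "nat \<Rightarrow> (nat \<Rightarrow> 'a::comm_ring_1) \<Rightarrow> 'a mat" where
  "compm n c = mat n n (\<lambda>(i,j). if i = Suc j then 1 else if j = n - 1 then c i else 0)"

lemma compm_carrier[simp]: "compm n c \<in> carrier_mat n n"
  unfolding compm_def by auto

lemma char_poly_compm:
  "char_poly (compm n c) = monom 1 n - (\<Sum>k<n. monom (c k) k)"
proof (induction n arbitrary: c)
  case 0
  show ?case unfolding char_poly_defs compm_def by (simp add: det_def)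
next
  case (Suc n)
  define X where "X = char_poly_matrix (compm (Suc n) c)"
  have X: "X \<in> carrier_mat (Suc n) (Suc n)" unfolding X_def by simp
  have Xe: "\<And>i j. i < Suc n \<Longrightarrow> j < Suc n \<Longrightarrow> X $$ (i,j) =
     (if i = j then [:0,1:] else 0) - (if i = Suc j then 1 else if j = n then [:c i:] else 0)"
    unfolding X_def char_poly_matrix_def compm_def by (auto simp: one_pCons)
  show ?case
  proof (cases "n = 0")
    case True
    have "char_poly (compm (Suc n) c) = det X" unfolding X_def char_poly_def ..
    also have "\<dots> = X $$ (0,0) * cofactor X 0 0"
      using laplace_expansion_row[OF X, of 0] True by simp
    also have "cofactor X 0 0 = 1" unfolding cofactor_def using X True
      by (simp add: det_def mat_delete_def)
    finally show ?thesis using Xe[of 0 0] True by (simp add: monom_0 monom_Suc X_def)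
  next
    case False
    have "char_poly (compm (Suc n) c) = det X" unfolding X_def char_poly_def ..
    also have "\<dots> = (\<Sum>j<Suc n. X $$ (0,j) * cofactor X 0 j)"
      using laplace_expansion_row[OF X, of 0] by simp
    also have "\<dots> = (\<Sum>j<Suc n. (if j = 0 then [:0,1:] * cofactor X 0 0 else 0)
        + (if j = n then [:- c 0:] * cofactor X 0 n else 0))"
      by (rule sum.cong, insert False, auto simp: Xe)
    also have "\<dots> = [:0,1:] * cofactor X 0 0 + [:- c 0:] * cofactor X 0 n"
      by (simp add: sum.distrib)
    also have "cofactor X 0 0 = char_poly (compm n (\<lambda>k. c (Suc k)))"
    proof -
      have "mat_delete X 0 0 = char_poly_matrix (compm n (\<lambda>k. c (Suc k)))"
        by (rule eq_matI, insert X, auto simp: mat_delete_def Xe char_poly_matrix_def compm_def one_pCons)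
      thus ?thesis unfolding cofactor_def char_poly_def by simp
    qed
    also have "cofactor X 0 n = 1"
    proof -
      have ut: "upper_triangular (mat_delete X 0 n)"
        by (rule upper_triangularI, insert X, auto simp: mat_delete_def Xe)
      have dm: "mat_delete X 0 n \<in> carrier_mat n n" using mat_delete_carrier[OF X] by simp
      have "det (mat_delete X 0 n) = prod_list (diag_mat (mat_delete X 0 n))"
        by (rule det_upper_triangular[OF ut dm])
      also have "diag_mat (mat_delete X 0 n) = replicate n (-1)"
        by (rule nth_equalityI, insert X, auto simp: diag_mat_def mat_delete_def Xe)
      finally have "det (mat_delete X 0 n) = (-1)^n" by simp
      thus ?thesis unfolding cofactor_def
        by (simp flip: power_add add: power_mult_distrib[symmetric])
    qed
    finally have eq: "char_poly (compm (Suc n) c) = [:0,1:] * (monom 1 n - (\<Sum>k<n. monom (c (Suc k)) k)) + [:- c 0:]"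
      using Suc by simp
    have xm: "\<And>(a::'a) k. [:0,1:] * monom a k = monom a (Suc k)"
      by (simp add: monom_Suc)
    have "[:0,1:] * (monom 1 n - (\<Sum>k<n. monom (c (Suc k)) k)) = monom 1 (Suc n) - (\<Sum>k<n. monom (c (Suc k)) (Suc k))"
      by (simp only: right_diff_distrib sum_distrib_left xm)
    moreover have "(\<Sum>k<Suc n. monom (c k) k) = [:c 0:] + (\<Sum>k<n. monom (c (Suc k)) (Suc k))"
      by (simp only: sum.lessThan_Suc_shift monom_0)
    ultimately show ?thesis using eq by simp
  qed
qed


lemma cyclic_char_poly:
  fixes A :: "'a::field mat" and col :: "nat \<Rightarrow> nat \<Rightarrow> 'a"
  assumes A: "A \<in> carrier_mat n n"
  and colS: "\<And>m i. i < n \<Longrightarrow> col (Suc m) i = (\<Sum>k<n. A $$ (i,k) * col m k)"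
  and ut: "\<And>i j. i < n \<Longrightarrow> j < i \<Longrightarrow> col j i = 0"
  and dg: "\<And>j. j < n \<Longrightarrow> col j j \<noteq> 0"
  and rec: "\<And>i. i < n \<Longrightarrow> col n i = (\<Sum>k<n. c k * col k i)"
  shows "char_poly A = monom 1 n - (\<Sum>k<n. monom (c k) k)"
proof -
  define K where "K = mat n n (\<lambda>(i,j). col j i)"
  have K: "K \<in> carrier_mat n n" unfolding K_def by simp
  have utK: "upper_triangular K" unfolding K_def
    by (rule upper_triangularI, auto simp: ut)
  have "det K = prod_list (diag_mat K)" by (rule det_upper_triangular[OF utK K])
  also have "\<dots> = (\<Prod>i\<in>{0..<n}. K $$ (i,i))" using K by (simp add: prod_list_diag_prod)
  also have "\<dots> \<noteq> 0" unfolding K_def using dg by simp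
  finally have dK: "det K \<noteq> 0" .
  from det_non_zero_imp_unit[OF K dK, unfolded Units_def, of "()"]
  obtain K' where K': "K' \<in> carrier_mat n n" and K'K: "K' * K = 1\<^sub>m n" and KK': "K * K' = 1\<^sub>m n"
    by (auto simp: ring_mat_def)
  define Cm where "Cm = compm n c"
  have Cm: "Cm \<in> carrier_mat n n" unfolding Cm_def by simp
  have AK: "A * K = K * Cm"
  proof (rule eq_matI)
    fix i j assume i: "i < dim_row (K * Cm)" and j: "j < dim_col (K * Cm)"
    hence i: "i < n" and j: "j < n" using K Cm by auto
    have "(A * K) $$ (i,j) = (\<Sum>k<n. A $$ (i,k) * col j k)"
      using A K i j by (simp add: scalar_prod_def K_def lessThan_atLeast0 row_def col_def)
    also have "\<dots> = col (Suc j) i" using colS[OF i] by simp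
    also have "\<dots> = (K * Cm) $$ (i,j)"
    proof (cases "j = n - 1")
      case True
      have "(K * Cm) $$ (i,j) = (\<Sum>k<n. col k i * c k)"
        using K Cm i j True by (auto simp: scalar_prod_def K_def Cm_def compm_def lessThan_atLeast0 intro!: sum.cong)
      also have "\<dots> = col n i" using rec[OF i] by (simp add: mult.commute)
      finally show ?thesis using True j by simp
    next
      case False
      have "(K * Cm) $$ (i,j) = (\<Sum>k\<in>{0..<n}. col k i * (if k = Suc j then 1 else if j = n - 1 then c k else 0))"
        using K Cm i j by (simp add: scalar_prod_def K_def Cm_def compm_def)
      also have "\<dots> = (\<Sum>k<n. if k = Suc j then col k i else 0)"
        unfolding lessThan_atLeast0 by (rule sum.cong, insert False, auto)
      also have "\<dots> = col (Suc j) i" using False j by simp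
      finally show ?thesis by simp
    qed
    finally show "(A * K) $$ (i,j) = (K * Cm) $$ (i,j)" .
  qed (insert A K Cm, auto)
  have "A = A * (K * K')" using A KK' by simp
  also have "\<dots> = A * K * K'" using A K K' by (simp add: assoc_mult_mat)
  also have "\<dots> = K * Cm * K'" unfolding AK ..
  finally have "similar_mat A Cm"
    by (intro similar_matI[of A Cm K K' n], insert A K K' Cm KK' K'K, auto)
  hence "char_poly A = char_poly Cm" by (rule char_poly_similar)
  thus ?thesis unfolding Cm_def char_poly_compm .
qed


lemma propagate:
  fixes g :: "nat \<Rightarrow> nat \<Rightarrow> 'a::field"
  assumes p: "p \<ge> 1" and z: "\<And>m l. l < p \<Longrightarrow> g m l = 0"
  and rel: "\<And>m j. p \<le> j \<Longrightarrow> j < n \<Longrightarrow> g m j = \<alpha> j * g (Suc m) (j-p) + \<beta> j * g m (j-p-1)"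
  shows "j < n \<Longrightarrow> g m j = 0"
proof (induction j arbitrary: m rule: less_induct)
  case (less j)
  show ?case
  proof (cases "j < p")
    case True thus ?thesis using z by simp
  next
    case False
    hence "g m j = \<alpha> j * g (Suc m) (j-p) + \<beta> j * g m (j-p-1)" using rel less by simp
    also have "g (Suc m) (j-p) = 0" using less False p by simp
    also have "g m (j-p-1) = 0" using less False p by simp
    finally show ?thesis by simp
  qed
qed

lemma pow_mat_Suc_left: assumes A: "A \<in> carrier_mat n n"
  shows "A ^\<^sub>m Suc m = A * A ^\<^sub>m m"
proof (induction m)
  case 0 thus ?case using A by simp
next
  case (Suc m)
  have "A ^\<^sub>m Suc (Suc m) = (A * A ^\<^sub>m m) * A" using Suc by simp
  also have "\<dots> = A * (A ^\<^sub>m m * A)" using A by (simp add: assoc_mult_mat[of _ n n _ n _ n])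
  finally show ?case by simp
qed

lemma rev_sum: "(\<Sum>k<Suc M. F (M-k) k) = (\<Sum>v=0..M. F v (M-v))"
  by (rule sum.reindex_bij_witness[of _ "\<lambda>x. M - x" "\<lambda>x. M - x"], auto)

lemma L1_carrier: "L1 p N a \<in> carrier_mat (N+2) (N+2)" unfolding L1_def by simp
lemma L2_carrier: "L2 p N b \<in> carrier_mat (N+p+1) (N+p+1)" unfolding L2_def by simp

lemma L1_col:
  assumes i: "i < N+2" and p: "p \<ge> 1"
  shows "(L1 p N a ^\<^sub>m Suc m) $$ (i,0) = (\<Sum>k<N+2. L1 p N a $$ (i,k) * (L1 p N a ^\<^sub>m m) $$ (k,0))"
    and "(\<Sum>k<N+2. L1 p N a $$ (i,k) * (L1 p N a ^\<^sub>m m) $$ (k,0)) =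
       (if i + p < N+2 then (L1 p N a ^\<^sub>m m) $$ (i+p,0) else 0)
     + (if i \<ge> 1 then a (i-1) * (L1 p N a ^\<^sub>m m) $$ (i-1,0) else 0)"
proof -
  let ?L = "L1 p N a"
  show "(?L ^\<^sub>m Suc m) $$ (i,0) = (\<Sum>k<N+2. ?L $$ (i,k) * (?L ^\<^sub>m m) $$ (k,0))"
    unfolding pow_mat_Suc_left[OF L1_carrier]
    using i L1_carrier[of p N a] by (simp add: scalar_prod_def lessThan_atLeast0 row_def col_def)
  have "(\<Sum>k<N+2. ?L $$ (i,k) * (?L ^\<^sub>m m) $$ (k,0)) =
     (\<Sum>k<N+2. (if k = i + p then (?L ^\<^sub>m m) $$ (k,0) else 0)
       + (if i \<ge> 1 then (if k = i - 1 then a k * (?L ^\<^sub>m m) $$ (k,0) else 0) else 0))"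
    by (rule sum.cong, insert i p, auto simp: L1_def)
  also have "\<dots> = (if i + p < N+2 then (?L ^\<^sub>m m) $$ (i+p,0) else 0)
     + (if i \<ge> 1 then a (i-1) * (?L ^\<^sub>m m) $$ (i-1,0) else 0)"
    using i p by (cases "i \<ge> 1"; auto simp: sum.distrib)
  finally show "(\<Sum>k<N+2. ?L $$ (i,k) * (?L ^\<^sub>m m) $$ (k,0)) =
     (if i + p < N+2 then (?L ^\<^sub>m m) $$ (i+p,0) else 0)
     + (if i \<ge> 1 then a (i-1) * (?L ^\<^sub>m m) $$ (i-1,0) else 0)" .
qed

lemma L2_col:
  assumes i: "i < N+p+1" and p: "p \<ge> 1"
  shows "(L2 p N b ^\<^sub>m Suc m) $$ (0,i) = (\<Sum>k<N+p+1. transpose_mat (L2 p N b) $$ (i,k) * (L2 p N b ^\<^sub>m m) $$ (0,k))"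
    and "(\<Sum>k<N+p+1. transpose_mat (L2 p N b) $$ (i,k) * (L2 p N b ^\<^sub>m m) $$ (0,k)) =
       (if i \<ge> 1 then (L2 p N b ^\<^sub>m m) $$ (0,i-1) else 0)
     + (if i \<le> N then b i * (L2 p N b ^\<^sub>m m) $$ (0,i+p) else 0)"
proof -
  let ?L = "L2 p N b"
  show "(?L ^\<^sub>m Suc m) $$ (0,i) = (\<Sum>k<N+p+1. transpose_mat ?L $$ (i,k) * (?L ^\<^sub>m m) $$ (0,k))"
    using i L2_carrier[of p N b] by (simp add: scalar_prod_def lessThan_atLeast0 row_def col_def mult.commute)
  have "(\<Sum>k<N+p+1. transpose_mat ?L $$ (i,k) * (?L ^\<^sub>m m) $$ (0,k)) =
     (\<Sum>k<N+p+1. (if i \<ge> 1 then (if k = i - 1 then (?L ^\<^sub>m m) $$ (0,k) else 0) else 0)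
       + (if i \<le> N then (if k = i + p then b i * (?L ^\<^sub>m m) $$ (0,k) else 0) else 0))"
    by (rule sum.cong, insert i p L2_carrier[of p N b], auto simp: L2_def)
  also have "\<dots> = (if i \<ge> 1 then (?L ^\<^sub>m m) $$ (0,i-1) else 0)
     + (if i \<le> N then b i * (?L ^\<^sub>m m) $$ (0,i+p) else 0)"
    using i p by (cases "i \<ge> 1"; auto simp: sum.distrib)
  finally show "(\<Sum>k<N+p+1. transpose_mat ?L $$ (i,k) * (?L ^\<^sub>m m) $$ (0,k)) =
       (if i \<ge> 1 then (?L ^\<^sub>m m) $$ (0,i-1) else 0)
     + (if i \<le> N then b i * (?L ^\<^sub>m m) $$ (0,i+p) else 0)" .
qed


lemma part1:
  fixes p N :: nat and a C :: "nat \<Rightarrow> complex"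
  assumes p: "p \<ge> 1"
    and a_nz: "\<forall>i\<le>N. a i \<noteq> 0"
    and C_rec: "\<forall>k\<ge>N+2. \<forall>l\<in>{1..p}.
        S1 p N a l k = (\<Sum>v=0..N+1. C v * S1 p N a l (k - v - 1))"
  shows "char_poly (L1 p N a) = monom 1 (N+2) - (\<Sum>v=0..N+1. monom (C v) (N+1-v))"
proof -
  let ?L = "L1 p N a"
  define col where "col m i = (?L ^\<^sub>m m) $$ (i,0)" for m i
  define c where "c k = C (N+1-k)" for k
  have cS: "\<And>m i. i < N+2 \<Longrightarrow> col (Suc m) i = (\<Sum>k<N+2. ?L $$ (i,k) * col m k)"
    unfolding col_def by (rule L1_col(1)[OF _ p])
  have cS2: "\<And>m i. i < N+2 \<Longrightarrow> col (Suc m) i = (if i + p < N+2 then col m (i+p) else 0)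
     + (if i \<ge> 1 then a (i-1) * col m (i-1) else 0)"
    unfolding col_def using L1_col[OF _ p] by simp
  have c0: "\<And>i. i < N+2 \<Longrightarrow> col 0 i = (if i = 0 then 1 else 0)"
    unfolding col_def using L1_carrier[of p N a] by simp
  have tri: "\<forall>i<N+2. (j < i \<longrightarrow> col j i = 0) \<and> (i = j \<longrightarrow> col j j \<noteq> 0)" for j
  proof (induction j)
    case 0 thus ?case using c0 by auto
  next
    case (Suc j)
    show ?case
    proof (intro allI impI conjI)
      fix i assume i: "i < N+2" and ji: "Suc j < i"
      show "col (Suc j) i = 0" unfolding cS2[OF i] using Suc ji i by auto
    next
      fix i assume i: "i < N+2" and ji: "i = Suc j"
      have e: "col (Suc j) (Suc j) = a j * col j j" using cS2[of "Suc j"] Suc i ji by auto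
      have "col j j \<noteq> 0" using spec[OF Suc.IH, of j] i ji by simp
      hence "a j * col j j \<noteq> 0" using i ji a_nz by auto
      thus "col (Suc j) (Suc j) \<noteq> 0" using e by simp
    qed
  qed
  define g where "g m j = col (m + (N+2)) j - (\<Sum>k<N+2. c k * col (m+k) j)" for m j
  define \<beta> where "\<beta> j = (if j - p \<ge> 1 then - a (j-p-1) else 0)" for j
  have g0: "g m j = 0" if "j < N+2" for m j
  proof (rule propagate[OF p, of g "N+2" "\<lambda>_. 1" \<beta>])
    fix m l assume l: "l < p"
    have "col (m + (N+2)) l = S1 p N a (l+1) (m + (N+2))" unfolding col_def S1_def by simp
    also have "\<dots> = (\<Sum>v=0..N+1. C v * S1 p N a (l+1) (m + (N+2) - v - 1))"
      using C_rec l by auto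
    also have "\<dots> = (\<Sum>v=0..N+1. C v * col (m + (N+1-v)) l)"
      by (rule sum.cong, auto simp: S1_def col_def)
    also have "\<dots> = (\<Sum>k<Suc (N+1). C (N+1-k) * col (m + k) l)"
      by (rule rev_sum[symmetric, of "\<lambda>v k. C v * col (m+k) l"])
    finally show "g m l = 0" unfolding g_def c_def by simp
  next
    fix m j assume pj: "p \<le> j" and j: "j < N+2"
    have colrel: "col M j = col (Suc M) (j-p) + \<beta> j * col M (j-p-1)" for M
      using cS2[of "j-p" M] pj j unfolding \<beta>_def by auto
    have "g m j = (col (Suc m + (N+2)) (j-p) + \<beta> j * col (m + (N+2)) (j-p-1))
       - (\<Sum>k<N+2. c k * (col (Suc m + k) (j-p) + \<beta> j * col (m+k) (j-p-1)))"
      unfolding g_def by (simp only: colrel, simp)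
    also have "\<dots> = 1 * g (Suc m) (j-p) + \<beta> j * g m (j-p-1)"
      unfolding g_def by (simp add: algebra_simps sum.distrib sum_distrib_left)
    finally show "g m j = 1 * g (Suc m) (j-p) + \<beta> j * g m (j-p-1)" .
  qed (fact that)
  have "char_poly ?L = monom 1 (N+2) - (\<Sum>k<N+2. monom (c k) k)"
  proof (rule cyclic_char_poly[OF L1_carrier, where col=col and c=c])
    fix m i assume "i < N+2" thus "col (Suc m) i = (\<Sum>k<N+2. ?L $$ (i,k) * col m k)" by (rule cS)
  next
    fix i j assume "i < N+2" "j < i" thus "col j i = 0" using tri by auto
  next
    fix j assume "j < N+2" thus "col j j \<noteq> 0" using tri by auto
  next
    fix i assume "i < N+2" thus "col (N+2) i = (\<Sum>k<N+2. c k * col k i)"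
      using g0[of i 0] unfolding g_def by simp
  qed
  also have "(\<Sum>k<N+2. monom (c k) k) = (\<Sum>v=0..N+1. monom (C v) (N+1-v))"
    unfolding c_def using rev_sum[of "\<lambda>v k. monom (C v) k" "N+1"] by simp
  finally show ?thesis .
qed


lemma part2:
  fixes p N :: nat and b Ct :: "nat \<Rightarrow> complex"
  assumes p: "p \<ge> 1"
    and b_nz: "\<forall>i\<le>N. b i \<noteq> 0"
    and Ct_rec: "\<forall>k\<ge>N+p+1. \<forall>l\<in>{1..p}.
        S2 p N b l k = (\<Sum>v=0..N+p. Ct v * S2 p N b l (k - v - 1))"
  shows "char_poly (L2 p N b) = monom 1 (N+p+1) - (\<Sum>v=0..N+p. monom (Ct v) (N+p-v))"
proof -
  let ?L = "L2 p N b"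
  let ?A = "transpose_mat ?L"
  have A: "?A \<in> carrier_mat (N+p+1) (N+p+1)" using L2_carrier[of p N b] by simp
  define col where "col m i = (?L ^\<^sub>m m) $$ (0,i)" for m i
  define c where "c k = Ct (N+p-k)" for k
  have cS: "\<And>m i. i < N+p+1 \<Longrightarrow> col (Suc m) i = (\<Sum>k<N+p+1. ?A $$ (i,k) * col m k)"
    unfolding col_def by (rule L2_col(1)[OF _ p])
  have cS2: "\<And>m i. i < N+p+1 \<Longrightarrow> col (Suc m) i = (if i \<ge> 1 then col m (i-1) else 0)
     + (if i \<le> N then b i * col m (i+p) else 0)"
    unfolding col_def using L2_col[OF _ p] by simp
  have c0: "\<And>i. i < N+p+1 \<Longrightarrow> col 0 i = (if i = 0 then 1 else 0)"
    unfolding col_def using L2_carrier[of p N b] by simp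
  have tri: "\<forall>i<N+p+1. (j < i \<longrightarrow> col j i = 0) \<and> (i = j \<longrightarrow> col j j \<noteq> 0)" for j
  proof (induction j)
    case 0 thus ?case using c0 by auto
  next
    case (Suc j)
    show ?case
    proof (intro allI impI conjI)
      fix i assume i: "i < N+p+1" and ji: "Suc j < i"
      show "col (Suc j) i = 0" unfolding cS2[OF i] using Suc ji i by auto
    next
      fix i assume i: "i < N+p+1" and ji: "i = Suc j"
      have e: "col (Suc j) (Suc j) = col j j" using cS2[of "Suc j"] Suc i ji by auto
      have "col j j \<noteq> 0" using spec[OF Suc.IH, of j] i ji by simp
      thus "col (Suc j) (Suc j) \<noteq> 0" using e by simp
    qed
  qed
  define g where "g m j = col (m + (N+p+1)) j - (\<Sum>k<N+p+1. c k * col (m+k) j)" for m j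
  define \<alpha> where "\<alpha> j = 1 / b (j-p)" for j
  define \<beta> where "\<beta> j = (if j - p \<ge> 1 then - 1 / b (j-p) else 0)" for j
  have g0: "g m j = 0" if "j < N+p+1" for m j
  proof (rule propagate[OF p, of g "N+p+1" \<alpha> \<beta>])
    fix m l assume l: "l < p"
    have "col (m + (N+p+1)) l = S2 p N b (l+1) (m + (N+p+1))" unfolding col_def S2_def by simp
    also have "\<dots> = (\<Sum>v=0..N+p. Ct v * S2 p N b (l+1) (m + (N+p+1) - v - 1))"
      using Ct_rec l by auto
    also have "\<dots> = (\<Sum>v=0..N+p. Ct v * col (m + (N+p-v)) l)"
      by (rule sum.cong, auto simp: S2_def col_def)
    also have "\<dots> = (\<Sum>k<Suc (N+p). Ct (N+p-k) * col (m + k) l)"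
      by (rule rev_sum[symmetric, of "\<lambda>v k. Ct v * col (m+k) l"])
    finally show "g m l = 0" unfolding g_def c_def by simp
  next
    fix m j assume pj: "p \<le> j" and j: "j < N+p+1"
    have bj: "b (j-p) \<noteq> 0" using b_nz pj j by auto
    have colrel: "col M j = \<alpha> j * col (Suc M) (j-p) + \<beta> j * col M (j-p-1)" for M
      using cS2[of "j-p" M] pj j bj unfolding \<alpha>_def \<beta>_def by (cases "j = p"; auto simp: field_simps)
    have "g m j = (\<alpha> j * col (Suc m + (N+p+1)) (j-p) + \<beta> j * col (m + (N+p+1)) (j-p-1))
       - (\<Sum>k<N+p+1. c k * (\<alpha> j * col (Suc m + k) (j-p) + \<beta> j * col (m+k) (j-p-1)))"
      unfolding g_def by (simp only: colrel, simp)
    also have "\<dots> = \<alpha> j * g (Suc m) (j-p) + \<beta> j * g m (j-p-1)"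
      unfolding g_def by (simp add: algebra_simps sum.distrib sum_distrib_left)
    finally show "g m j = \<alpha> j * g (Suc m) (j-p) + \<beta> j * g m (j-p-1)" .
  qed (fact that)
  have "char_poly ?A = monom 1 (N+p+1) - (\<Sum>k<N+p+1. monom (c k) k)"
  proof (rule cyclic_char_poly[OF A, where col=col and c=c])
    fix m i assume "i < N+p+1" thus "col (Suc m) i = (\<Sum>k<N+p+1. ?A $$ (i,k) * col m k)" by (rule cS)
  next
    fix i j assume "i < N+p+1" "j < i" thus "col j i = 0" using tri by auto
  next
    fix j assume "j < N+p+1" thus "col j j \<noteq> 0" using tri by auto
  next
    fix i assume "i < N+p+1" thus "col (N+p+1) i = (\<Sum>k<N+p+1. c k * col k i)"
      using g0[of i 0] unfolding g_def by simp
  qed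
  also have "(\<Sum>k<N+p+1. monom (c k) k) = (\<Sum>v=0..N+p. monom (Ct v) (N+p-v))"
    unfolding c_def using rev_sum[of "\<lambda>v k. monom (Ct v) k" "N+p"] by simp
  finally show ?thesis using char_poly_transpose_mat[OF L2_carrier[of p N b]] by simp
qed

theorem proposition1:
  fixes p N :: nat and a b C Ct :: "nat \<Rightarrow> complex"
  assumes p: "p \<ge> 1" and N: "N \<ge> 2 * p - 1"
    and a_nz: "\<forall>i\<le>N. a i \<noteq> 0" and b_nz: "\<forall>i\<le>N. b i \<noteq> 0"
    and C_rec: "\<forall>k\<ge>N+2. \<forall>l\<in>{1..p}.
        S1 p N a l k = (\<Sum>v=0..N+1. C v * S1 p N a l (k - v - 1))"
    and Ct_rec: "\<forall>k\<ge>N+p+1. \<forall>l\<in>{1..p}.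
        S2 p N b l k = (\<Sum>v=0..N+p. Ct v * S2 p N b l (k - v - 1))"
  shows "char_poly (L1 p N a) = monom 1 (N+2) - (\<Sum>v=0..N+1. monom (C v) (N+1-v))
       \<and> char_poly (L2 p N b) = monom 1 (N+p+1) - (\<Sum>v=0..N+p. monom (Ct v) (N+p-v))"
  using part1[OF p a_nz C_rec] part2[OF p b_nz Ct_rec] by simp

end
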